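(* Let $\Bbbk$ be an algebraically closed field of characteristic zero, $G$ a finite group, $\chi:G\to\Bbbk^\times$ a linear character, $g\in Z(G)$, $n\geq2$ the multiplicative order of $\chi(g)$, and $H$ the $\Bbbk$-algebra generated by $\Bbbk G$ and $z$ with relations $z^n=0$, $zs=\chi(s)sz$ ($s\in G$). Then for each $0\leq m\leq n-1$, the $2^p-1$ ideals $\big(z^m\sum_{i\in S}e_i\big)$, for $S$ ranging over the nonempty subsets of $\{0,1,\dots,p-1\}$, are pairwise distinct.
   Context: $\chi_0,\dots,\chi_{p-1}$ are the irreducible characters of $G$ and $e_i=\frac{\chi_i(1)}{|G|}\sum_{h\in G}\chi_i(h)h^{-1}$ (so $\sum_{i=0}^{p-1}e_i=1$). $(a)$ denotes the two-sided ideal of $H$ generated by $a$. *)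

theory Defs
  imports "Jordan_Normal_Form.Matrix" "HOL-Computational_Algebra.Polynomial"
begin

definition alg_closed_field :: "'k::field itself \<Rightarrow> bool" where
  "alg_closed_field _ \<longleftrightarrow> (\<forall>q :: 'k poly. degree q \<ge> 1 \<longrightarrow> (\<exists>x. poly q x = 0))"

definition mat_trace :: "'k::comm_ring_1 mat \<Rightarrow> 'k" where
  "mat_trace A = (\<Sum>i<dim_row A. A $$ (i, i))"

definition is_rep :: "('g, 'b) monoid_scheme \<Rightarrow> nat \<Rightarrow> ('g \<Rightarrow> 'k::field mat) \<Rightarrow> bool" where
  "is_rep G d \<rho> \<longleftrightarrow>
     (\<forall>s\<in>carrier G. \<rho> s \<in> carrier_mat d d) \<and>
     \<rho> \<one>\<^bsub>G\<^esub> = one_mat d \<and>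
     (\<forall>s\<in>carrier G. \<forall>t\<in>carrier G. \<rho> (s \<otimes>\<^bsub>G\<^esub> t) = \<rho> s * \<rho> t)"

definition invariant_subspace :: "('g, 'b) monoid_scheme \<Rightarrow> nat \<Rightarrow> ('g \<Rightarrow> 'k::field mat) \<Rightarrow> 'k vec set \<Rightarrow> bool" where
  "invariant_subspace G d \<rho> W \<longleftrightarrow>
     W \<subseteq> carrier_vec d \<and> 0\<^sub>v d \<in> W \<and>
     (\<forall>v\<in>W. \<forall>w\<in>W. v + w \<in> W) \<and>
     (\<forall>c. \<forall>v\<in>W. c \<cdot>\<^sub>v v \<in> W) \<and>
     (\<forall>s\<in>carrier G. \<forall>v\<in>W. \<rho> s *\<^sub>v v \<in> W)"

definition irreducible_rep :: "('g, 'b) monoid_scheme \<Rightarrow> nat \<Rightarrow> ('g \<Rightarrow> 'k::field mat) \<Rightarrow> bool" where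
  "irreducible_rep G d \<rho> \<longleftrightarrow> d > 0 \<and> is_rep G d \<rho> \<and>
     (\<forall>W. invariant_subspace G d \<rho> W \<longrightarrow> W = {0\<^sub>v d} \<or> W = carrier_vec d)"

definition rep_character :: "('g, 'b) monoid_scheme \<Rightarrow> ('g \<Rightarrow> 'k::field mat) \<Rightarrow> 'g \<Rightarrow> 'k" where
  "rep_character G \<rho> = restrict (\<lambda>s. mat_trace (\<rho> s)) (carrier G)"

definition irr_chars :: "('g, 'b) monoid_scheme \<Rightarrow> ('g \<Rightarrow> 'k::field) set" where
  "irr_chars G = {rep_character G \<rho> | \<rho> d. irreducible_rep G d \<rho>}"

text \<open>H has k-basis { s z^j : s in G, 0 <= j < n }; an element is its coefficient function
  (s, j) \<mapsto> coefficient of s z^j, vanishing outside G x {0..<n}.  This is the standard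
  basis of the algebra generated by kG and z with z^n = 0 and z s = chi(s) s z.\<close>

definition Hcarrier :: "('g, 'b) monoid_scheme \<Rightarrow> nat \<Rightarrow> ('g \<Rightarrow> nat \<Rightarrow> 'k::field) set" where
  "Hcarrier G n = {f. \<forall>s j. (s \<notin> carrier G \<or> j \<ge> n) \<longrightarrow> f s j = 0}"

definition Hzero :: "'g \<Rightarrow> nat \<Rightarrow> 'k::field" where
  "Hzero = (\<lambda>s j. 0)"

definition Hadd :: "('g \<Rightarrow> nat \<Rightarrow> 'k::field) \<Rightarrow> ('g \<Rightarrow> nat \<Rightarrow> 'k) \<Rightarrow> 'g \<Rightarrow> nat \<Rightarrow> 'k" where
  "Hadd a b = (\<lambda>s j. a s j + b s j)"

text \<open>Multiplication: (s z^a)(t z^b) = chi(t)^a (s t) z^(a+b), which is 0 if a + b >= n.\<close>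
definition Hmult :: "('g, 'b) monoid_scheme \<Rightarrow> ('g \<Rightarrow> 'k::field) \<Rightarrow> nat \<Rightarrow>
    ('g \<Rightarrow> nat \<Rightarrow> 'k) \<Rightarrow> ('g \<Rightarrow> nat \<Rightarrow> 'k) \<Rightarrow> 'g \<Rightarrow> nat \<Rightarrow> 'k" where
  "Hmult G \<chi> n a b = (\<lambda>u j. if u \<in> carrier G \<and> j < n then
      (\<Sum>s\<in>carrier G. \<Sum>i\<le>j. a s i * b (inv\<^bsub>G\<^esub> s \<otimes>\<^bsub>G\<^esub> u) (j - i) * (\<chi> (inv\<^bsub>G\<^esub> s \<otimes>\<^bsub>G\<^esub> u)) ^ i)
    else 0)"

definition Hbasis :: "'g \<Rightarrow> nat \<Rightarrow> 'g \<Rightarrow> nat \<Rightarrow> 'k::field" where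
  "Hbasis s j = (\<lambda>u i. if u = s \<and> i = j then 1 else 0)"

definition Hideal :: "('g, 'b) monoid_scheme \<Rightarrow> ('g \<Rightarrow> 'k::field) \<Rightarrow> nat \<Rightarrow> ('g \<Rightarrow> nat \<Rightarrow> 'k) set \<Rightarrow> bool" where
  "Hideal G \<chi> n I \<longleftrightarrow> I \<subseteq> Hcarrier G n \<and> Hzero \<in> I \<and>
     (\<forall>a\<in>I. \<forall>b\<in>I. Hadd a b \<in> I) \<and>
     (\<forall>h\<in>Hcarrier G n. \<forall>a\<in>I. Hmult G \<chi> n h a \<in> I \<and> Hmult G \<chi> n a h \<in> I)"

definition Hideal_gen :: "('g, 'b) monoid_scheme \<Rightarrow> ('g \<Rightarrow> 'k::field) \<Rightarrow> nat \<Rightarrow> ('g \<Rightarrow> nat \<Rightarrow> 'k) \<Rightarrow> ('g \<Rightarrow> nat \<Rightarrow> 'k) set" where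
  "Hideal_gen G \<chi> n x = \<Inter>{I. Hideal G \<chi> n I \<and> x \<in> I}"

text \<open>e_psi = psi(1)/|G| * sum_{h in G} psi(h) h^{-1}, for a character psi.\<close>
definition char_idem :: "('g, 'b) monoid_scheme \<Rightarrow> ('g \<Rightarrow> 'k::field) \<Rightarrow> 'g \<Rightarrow> nat \<Rightarrow> 'k" where
  "char_idem G \<psi> = (\<lambda>u j. if u \<in> carrier G \<and> j = 0 then
      \<psi> \<one>\<^bsub>G\<^esub> / of_nat (card (carrier G)) * \<psi> (inv\<^bsub>G\<^esub> u) else 0)"

definition idem_sum :: "('g, 'b) monoid_scheme \<Rightarrow> ('g \<Rightarrow> 'k::field) set \<Rightarrow> 'g \<Rightarrow> nat \<Rightarrow> 'k" where
  "idem_sum G S = (\<lambda>u j. \<Sum>\<psi>\<in>S. char_idem G \<psi> u j)"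

end

theory Submission
  imports Defs "Jordan_Normal_Form.Char_Poly" "HOL-Library.Function_Algebras"
begin

lemma mv_entry:
  assumes "A \<in> carrier_mat r c" "v \<in> carrier_vec c" "i < r"
  shows "(A *\<^sub>v v) $ i = (\<Sum>j\<in>{0..<c}. A $$ (i,j) * v $ j)"
  using assms by (simp add: index_mult_mat_vec scalar_prod_def)

lemma mm_entry:
  assumes "A \<in> carrier_mat r c" "B \<in> carrier_mat c q" "i < r" "j < q"
  shows "(A * B) $$ (i,j) = (\<Sum>k\<in>{0..<c}. A $$ (i,k) * B $$ (k,j))"
  using assms by (simp add: index_mult_mat scalar_prod_def)

lemma mat_trace_alt: "A \<in> carrier_mat r r \<Longrightarrow> mat_trace A = (\<Sum>i\<in>{0..<r}. A $$ (i,i))"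
  by (simp add: mat_trace_def lessThan_atLeast0)

lemma trace_comm:
  assumes A: "A \<in> carrier_mat r c" and B: "B \<in> carrier_mat c r"
  shows "mat_trace (A * B) = mat_trace (B * A)"
proof -
  have "mat_trace (A * B) = (\<Sum>i\<in>{0..<r}. (A * B) $$ (i,i))"
    using A B by (intro mat_trace_alt) auto
  also have "\<dots> = (\<Sum>i\<in>{0..<r}. \<Sum>k\<in>{0..<c}. A $$ (i,k) * B $$ (k,i))"
    by (intro sum.cong refl) (simp add: mm_entry[OF A B])
  also have "\<dots> = (\<Sum>k\<in>{0..<c}. \<Sum>i\<in>{0..<r}. B $$ (k,i) * A $$ (i,k))"
    by (subst sum.swap) (simp add: mult.commute)
  also have "\<dots> = (\<Sum>i\<in>{0..<c}. (B * A) $$ (i,i))"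
    by (intro sum.cong refl) (simp add: mm_entry[OF B A])
  also have "\<dots> = mat_trace (B * A)"
    using A B by (intro mat_trace_alt[symmetric]) auto
  finally show ?thesis .
qed

lemma mat_eq_unit:
  assumes "(C :: 'a :: comm_ring_1 mat) \<in> carrier_mat r c" "\<And>j. j < c \<Longrightarrow> C *\<^sub>v unit_vec c j = 0\<^sub>v r"
  shows "C = 0\<^sub>m r c"
proof (rule eq_matI)
  fix i j assume i0: "i < dim_row (0\<^sub>m r c)" and j0: "j < dim_col (0\<^sub>m r c)"
  have i: "i < r" and j: "j < c" using i0 j0 by auto
  have "(C *\<^sub>v unit_vec c j) $ i = row C i \<bullet> unit_vec c j"
    using assms(1) i by (simp add: index_mult_mat_vec)
  also have "\<dots> = row C i $ j" using j by (rule scalar_prod_right_unit)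
  finally have "C $$ (i,j) = (C *\<^sub>v unit_vec c j) $ i" using assms(1) i j by simp
  then show "C $$ (i,j) = 0\<^sub>m r c $$ (i,j)" using assms i j by simp
qed (use assms in auto)

lemma mult_zero_vec: "(C :: 'a :: comm_ring_1 mat) \<in> carrier_mat r c \<Longrightarrow> C *\<^sub>v 0\<^sub>v c = 0\<^sub>v r"
  by (intro eq_vecI) (auto simp: mv_entry)

lemma ker_lemma:
  assumes irr: "irreducible_rep G d' \<sigma>" and C: "(C :: 'k :: field mat) \<in> carrier_mat r d'"
    and rc: "\<forall>s\<in>carrier G. \<rho> s \<in> carrier_mat r r"
    and inter: "\<forall>s\<in>carrier G. \<rho> s * C = C * \<sigma> s"
    and v: "v \<in> carrier_vec d'" "v \<noteq> 0\<^sub>v d'" "C *\<^sub>v v = 0\<^sub>v r"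
  shows "C = 0\<^sub>m r d'"
proof -
  let ?W = "{v\<in>carrier_vec d'. C *\<^sub>v v = 0\<^sub>v r}"
  have rep: "is_rep G d' \<sigma>" using irr by (simp add: irreducible_rep_def)
  have sc: "\<And>s. s \<in> carrier G \<Longrightarrow> \<sigma> s \<in> carrier_mat d' d'" using rep by (simp add: is_rep_def)
  have "invariant_subspace G d' \<sigma> ?W"
    unfolding invariant_subspace_def
  proof (intro conjI ballI allI)
    show "?W \<subseteq> carrier_vec d'" by auto
    show "0\<^sub>v d' \<in> ?W" using C by (simp add: mult_zero_vec)
    fix x assume x: "x \<in> ?W"
    { fix y assume y: "y \<in> ?W"
      show "x + y \<in> ?W" using x y C by (simp add: mult_add_distrib_mat_vec) }
    { fix c have "c \<cdot>\<^sub>v (0\<^sub>v r :: 'k vec) = 0\<^sub>v r" by (intro eq_vecI; simp)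
      then show "c \<cdot>\<^sub>v x \<in> ?W" using x C by (simp add: mult_mat_vec) }
    { fix s assume s: "s \<in> carrier G"
      have "C *\<^sub>v (\<sigma> s *\<^sub>v x) = (C * \<sigma> s) *\<^sub>v x" using C sc[OF s] x by (simp add: assoc_mult_mat_vec)
      also have "\<dots> = (\<rho> s * C) *\<^sub>v x" using inter s by simp
      also have "\<dots> = \<rho> s *\<^sub>v (C *\<^sub>v x)" using C rc[rule_format, OF s] x by (simp add: assoc_mult_mat_vec)
      also have "\<dots> = 0\<^sub>v r" using x rc s by (simp add: mult_zero_vec)
      finally show "\<sigma> s *\<^sub>v x \<in> ?W" using sc[OF s] x by simp }
  qed
  then have disj: "?W = {0\<^sub>v d'} \<or> ?W = carrier_vec d'" using irr by (simp add: irreducible_rep_def)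
  have "v \<in> ?W" using v by simp
  then have "?W \<noteq> {0\<^sub>v d'}" using v(2) by blast
  then have W: "?W = carrier_vec d'" using disj by blast
  show ?thesis
  proof (rule mat_eq_unit[OF C])
    fix j assume "j < d'"
    then have "unit_vec d' j \<in> carrier_vec d'" by simp
    then have "unit_vec d' j \<in> ?W" using W by (simp only:)
    then show "C *\<^sub>v unit_vec d' j = 0\<^sub>v r" by simp
  qed
qed

lemma img_lemma:
  assumes irr: "irreducible_rep G d \<rho>" and C: "(C :: 'k :: field mat) \<in> carrier_mat d c"
    and sc: "\<forall>s\<in>carrier G. \<sigma> s \<in> carrier_mat c c"
    and inter: "\<forall>s\<in>carrier G. \<rho> s * C = C * \<sigma> s"
    and nz: "C \<noteq> 0\<^sub>m d c"
  shows "\<forall>y\<in>carrier_vec d. \<exists>v\<in>carrier_vec c. C *\<^sub>v v = y"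
proof -
  let ?W = "{C *\<^sub>v v | v. v \<in> carrier_vec c}"
  have rep: "is_rep G d \<rho>" using irr by (simp add: irreducible_rep_def)
  have rc: "\<And>s. s \<in> carrier G \<Longrightarrow> \<rho> s \<in> carrier_mat d d" using rep by (simp add: is_rep_def)
  have "invariant_subspace G d \<rho> ?W"
    unfolding invariant_subspace_def
  proof (intro conjI ballI allI)
    show "?W \<subseteq> carrier_vec d" using C by auto
    show "0\<^sub>v d \<in> ?W" using C by (auto intro!: exI[of _ "0\<^sub>v c"] simp: mult_zero_vec)
    fix x assume x: "x \<in> ?W"
    then obtain a where a: "a \<in> carrier_vec c" "x = C *\<^sub>v a" by auto
    { fix y assume y: "y \<in> ?W"
      then obtain b where b: "b \<in> carrier_vec c" "y = C *\<^sub>v b" by auto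
      show "x + y \<in> ?W" using a b C by (auto intro!: exI[of _ "a + b"] simp: mult_add_distrib_mat_vec) }
    { fix k show "k \<cdot>\<^sub>v x \<in> ?W" using a C by (auto intro!: exI[of _ "k \<cdot>\<^sub>v a"] simp: mult_mat_vec) }
    { fix s assume s: "s \<in> carrier G"
      have "\<rho> s *\<^sub>v (C *\<^sub>v a) = (\<rho> s * C) *\<^sub>v a" using C rc[OF s] a by (simp add: assoc_mult_mat_vec)
      also have "\<dots> = (C * \<sigma> s) *\<^sub>v a" using inter s by simp
      also have "\<dots> = C *\<^sub>v (\<sigma> s *\<^sub>v a)" using C sc[rule_format, OF s] a by (simp add: assoc_mult_mat_vec)
      finally have "\<rho> s *\<^sub>v x = C *\<^sub>v (\<sigma> s *\<^sub>v a)" using a by simp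
      moreover have "\<sigma> s *\<^sub>v a \<in> carrier_vec c" using sc[rule_format,OF s] a by simp
      ultimately show "\<rho> s *\<^sub>v x \<in> ?W" unfolding mem_Collect_eq by (intro exI[of _ "\<sigma> s *\<^sub>v a"]) simp }
  qed
  then have "?W = {0\<^sub>v d} \<or> ?W = carrier_vec d" using irr by (simp add: irreducible_rep_def)
  moreover have "?W \<noteq> {0\<^sub>v d}"
  proof
    assume "?W = {0\<^sub>v d}"
    have "C = 0\<^sub>m d c"
    proof (rule mat_eq_unit[OF C])
      fix j assume "j < c"
      then have "C *\<^sub>v unit_vec c j \<in> ?W" unfolding mem_Collect_eq by (intro exI[of _ "unit_vec c j"]) simp
      then show "C *\<^sub>v unit_vec c j = 0\<^sub>v d" using \<open>?W = {0\<^sub>v d}\<close> by simp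
    qed
    with nz show False by simp
  qed
  ultimately have W: "?W = carrier_vec d" by blast
  show ?thesis
  proof
    fix y :: "'k vec" assume "y \<in> carrier_vec d"
    then have "y \<in> ?W" using W by simp
    then obtain v where "v \<in> carrier_vec c" "y = C *\<^sub>v v" by blast
    then show "\<exists>v\<in>carrier_vec c. C *\<^sub>v v = y" by blast
  qed
qed

lemma mat_col_unit:
  assumes "(C :: 'a :: comm_ring_1 mat) \<in> carrier_mat r c" "i < r" "j < c"
  shows "C $$ (i,j) = (C *\<^sub>v unit_vec c j) $ i"
proof -
  have "(C *\<^sub>v unit_vec c j) $ i = row C i \<bullet> unit_vec c j"
    using assms(1,2) by (simp add: index_mult_mat_vec)
  also have "\<dots> = row C i $ j" using assms(3) by (rule scalar_prod_right_unit)
  finally show ?thesis using assms by simp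
qed

lemma vec_minus_zero:
  assumes "(x :: 'a :: ab_group_add vec) \<in> carrier_vec n" "y \<in> carrier_vec n" "x - y = 0\<^sub>v n"
  shows "x = y"
proof (rule eq_vecI)
  fix i assume i: "i < dim_vec y"
  have i': "i < n" using i assms(2) by simp
  have "(x - y) $ i = 0" using assms(3) i' by simp
  moreover have "(x - y) $ i = x $ i - y $ i" using i by (simp add: index_minus_vec)
  ultimately show "x $ i = y $ i" by simp
qed (use assms in auto)

lemma smult_one_mat_vec:
  assumes "(v :: 'a :: comm_ring_1 vec) \<in> carrier_vec d"
  shows "(k \<cdot>\<^sub>m 1\<^sub>m d) *\<^sub>v v = k \<cdot>\<^sub>v v"
proof (rule eq_vecI)
  fix i assume "i < dim_vec (k \<cdot>\<^sub>v v)"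
  then have i: "i < d" using assms by simp
  have "((k \<cdot>\<^sub>m 1\<^sub>m d) *\<^sub>v v) $ i = (\<Sum>j\<in>{0..<d}. (k \<cdot>\<^sub>m 1\<^sub>m d) $$ (i,j) * v $ j)"
    using assms i by (intro mv_entry) auto
  also have "\<dots> = (\<Sum>j\<in>{0..<d}. (if j = i then k * v $ j else 0))"
    using i by (intro sum.cong refl) auto
  also have "\<dots> = k * v $ i" using i by simp
  finally show "((k \<cdot>\<^sub>m 1\<^sub>m d) *\<^sub>v v) $ i = (k \<cdot>\<^sub>v v) $ i" using i assms by simp
qed (use assms in auto)

lemma rep_mat: "is_rep G d \<rho> \<Longrightarrow> s \<in> carrier G \<Longrightarrow> \<rho> s \<in> carrier_mat d d"
  by (simp add: is_rep_def)

lemma rep_mult: "is_rep G d \<rho> \<Longrightarrow> s \<in> carrier G \<Longrightarrow> t \<in> carrier G \<Longrightarrow> \<rho> (s \<otimes>\<^bsub>G\<^esub> t) = \<rho> s * \<rho> t"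
  by (simp add: is_rep_def)

lemma rep_inv:
  assumes "group G" "is_rep G d \<rho>" "s \<in> carrier G"
  shows "\<rho> (inv\<^bsub>G\<^esub> s) * \<rho> s = 1\<^sub>m d" "\<rho> s * \<rho> (inv\<^bsub>G\<^esub> s) = 1\<^sub>m d"
proof -
  have "\<rho> (inv\<^bsub>G\<^esub> s) * \<rho> s = \<rho> (inv\<^bsub>G\<^esub> s \<otimes>\<^bsub>G\<^esub> s)" using assms by (simp add: rep_mult)
  also have "\<dots> = 1\<^sub>m d" using assms by (simp add: is_rep_def group.l_inv)
  finally show "\<rho> (inv\<^bsub>G\<^esub> s) * \<rho> s = 1\<^sub>m d" .
  have "\<rho> s * \<rho> (inv\<^bsub>G\<^esub> s) = \<rho> (s \<otimes>\<^bsub>G\<^esub> inv\<^bsub>G\<^esub> s)" using assms by (simp add: rep_mult)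
  also have "\<dots> = 1\<^sub>m d" using assms by (simp add: is_rep_def group.r_inv)
  finally show "\<rho> s * \<rho> (inv\<^bsub>G\<^esub> s) = 1\<^sub>m d" .
qed

lemma schur1:
  assumes irr1: "irreducible_rep G d \<rho>" and irr2: "irreducible_rep G d' \<sigma>"
    and A: "(A :: 'k :: field mat) \<in> carrier_mat d d'"
    and inter: "\<forall>s\<in>carrier G. \<rho> s * A = A * \<sigma> s"
    and nz: "A \<noteq> 0\<^sub>m d d'"
  shows "rep_character G \<rho> = rep_character G \<sigma>"
proof -
  have rep1: "is_rep G d \<rho>" and rep2: "is_rep G d' \<sigma>" using irr1 irr2 by (auto simp: irreducible_rep_def)
  have rc: "\<forall>s\<in>carrier G. \<rho> s \<in> carrier_mat d d" using rep1 by (simp add: is_rep_def)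
  have sc: "\<forall>s\<in>carrier G. \<sigma> s \<in> carrier_mat d' d'" using rep2 by (simp add: is_rep_def)
  have inj: "\<And>v. v \<in> carrier_vec d' \<Longrightarrow> A *\<^sub>v v = 0\<^sub>v d \<Longrightarrow> v = 0\<^sub>v d'"
  proof (rule ccontr)
    fix v assume "v \<in> carrier_vec d'" "A *\<^sub>v v = 0\<^sub>v d" "v \<noteq> 0\<^sub>v d'"
    then have "A = 0\<^sub>m d d'" using ker_lemma[OF irr2 A rc inter] by blast
    with nz show False by simp
  qed
  have surj: "\<forall>y\<in>carrier_vec d. \<exists>v\<in>carrier_vec d'. A *\<^sub>v v = y"
    by (rule img_lemma[OF irr1 A sc inter nz])
  have "\<forall>k. \<exists>v. k < d \<longrightarrow> v \<in> carrier_vec d' \<and> A *\<^sub>v v = unit_vec d k"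
    using surj by (metis unit_vec_carrier)
  then obtain pre where pre: "\<And>k. k < d \<Longrightarrow> pre k \<in> carrier_vec d' \<and> A *\<^sub>v pre k = unit_vec d k"
    by metis
  define B where "B = mat d' d (\<lambda>(i,k). pre k $ i)"
  have B: "B \<in> carrier_mat d' d" by (simp add: B_def)
  have colB: "col B k = pre k" if k: "k < d" for k
    using pre[OF k] k by (auto simp: B_def col_mat intro!: eq_vecI)
  have AB: "A * B = 1\<^sub>m d"
  proof (rule eq_matI)
    fix i k assume i: "i < dim_row (1\<^sub>m d)" and k: "k < dim_col (1\<^sub>m d)"
    have "(A * B) $$ (i,k) = row A i \<bullet> col B k" using A B i k by simp
    also have "\<dots> = (A *\<^sub>v pre k) $ i" using A i k colB by simp
    also have "\<dots> = 1\<^sub>m d $$ (i,k)" using pre i k by simp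
    finally show "(A * B) $$ (i,k) = 1\<^sub>m d $$ (i,k)" .
  qed (use A B in auto)
  have BAv: "(B * A) *\<^sub>v v = v" if v: "v \<in> carrier_vec d'" for v
  proof -
    have "A *\<^sub>v ((B * A) *\<^sub>v v) = (A * (B * A)) *\<^sub>v v" using A B v by (intro assoc_mult_mat_vec[of A d d' "B*A" d' v, symmetric]) auto
    also have "A * (B * A) = (A * B) * A" using A B by (simp add: assoc_mult_mat)
    also have "\<dots> = A" using AB A by simp
    finally have e1: "A *\<^sub>v ((B * A) *\<^sub>v v) = A *\<^sub>v v" .
    have BAv_c: "(B * A) *\<^sub>v v \<in> carrier_vec d'" using A B v by simp
    have "A *\<^sub>v ((B * A) *\<^sub>v v - v) = A *\<^sub>v ((B * A) *\<^sub>v v) - A *\<^sub>v v"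
      by (rule mult_minus_distrib_mat_vec[OF A BAv_c v])
    also have "\<dots> = 0\<^sub>v d" unfolding e1 by (rule minus_cancel_vec) (use A v in simp)
    finally have e2: "A *\<^sub>v ((B * A) *\<^sub>v v - v) = 0\<^sub>v d" .
    have "(B * A) *\<^sub>v v - v = 0\<^sub>v d'"
      by (rule inj[OF _ e2]) (use BAv_c v in simp)
    then show ?thesis by (rule vec_minus_zero[OF BAv_c v])
  qed
  have BA: "B * A = 1\<^sub>m d'"
  proof (rule eq_matI)
    fix i j assume i: "i < dim_row (1\<^sub>m d')" and j: "j < dim_col (1\<^sub>m d')"
    have "(B * A) $$ (i,j) = ((B * A) *\<^sub>v unit_vec d' j) $ i"
      using A B i j by (intro mat_col_unit[of _ d' d']) auto
    also have "\<dots> = unit_vec d' j $ i" using j by (simp add: BAv)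
    finally show "(B * A) $$ (i,j) = 1\<^sub>m d' $$ (i,j)" using i j by simp
  qed (use A B in auto)
  have tr: "mat_trace (\<sigma> s) = mat_trace (\<rho> s)" if s: "s \<in> carrier G" for s
  proof -
    have r: "\<rho> s \<in> carrier_mat d d" and q: "\<sigma> s \<in> carrier_mat d' d'" using rc sc s by auto
    have "mat_trace (\<sigma> s) = mat_trace ((B * A) * \<sigma> s)" using BA q by simp
    also have "(B * A) * \<sigma> s = B * (A * \<sigma> s)" using A B q by (simp add: assoc_mult_mat)
    also have "A * \<sigma> s = \<rho> s * A" using inter s by simp
    also have "B * (\<rho> s * A) = (B * \<rho> s) * A" using A B r by (simp add: assoc_mult_mat)
    also have "mat_trace \<dots> = mat_trace (A * (B * \<rho> s))" using A B r by (intro trace_comm[of _ d' d]) auto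
    also have "A * (B * \<rho> s) = (A * B) * \<rho> s" using A B r by (simp add: assoc_mult_mat)
    also have "\<dots> = \<rho> s" using AB r by simp
    finally show ?thesis .
  qed
  show ?thesis unfolding rep_character_def using tr by (intro restrict_ext) simp
qed

lemma schur2:
  assumes ac: "alg_closed_field TYPE('k::field)"
    and irr: "irreducible_rep G d \<rho>" and A: "(A :: 'k mat) \<in> carrier_mat d d"
    and inter: "\<forall>s\<in>carrier G. \<rho> s * A = A * \<rho> s"
  shows "\<exists>l. A = l \<cdot>\<^sub>m 1\<^sub>m d"
proof -
  have d: "d > 0" and rep: "is_rep G d \<rho>" using irr by (auto simp: irreducible_rep_def)
  have rc: "\<forall>s\<in>carrier G. \<rho> s \<in> carrier_mat d d" using rep by (simp add: is_rep_def)
  have "degree (char_poly A) \<ge> 1" using degree_monic_char_poly[OF A] d by simp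
  then obtain l where "poly (char_poly A) l = 0" using ac unfolding alg_closed_field_def by blast
  then have "eigenvalue A l" using eigenvalue_root_char_poly[OF A] by simp
  then obtain v where v: "v \<in> carrier_vec d" "v \<noteq> 0\<^sub>v d" "A *\<^sub>v v = l \<cdot>\<^sub>v v"
    using A unfolding eigenvalue_def eigenvector_def by auto
  define C where "C = A - l \<cdot>\<^sub>m 1\<^sub>m d"
  have C: "C \<in> carrier_mat d d" using A unfolding C_def by (intro minus_carrier_mat smult_carrier_mat one_carrier_mat)
  have Cv: "C *\<^sub>v v = 0\<^sub>v d"
    using A v by (simp add: C_def minus_mult_distrib_mat_vec smult_one_mat_vec minus_cancel_vec)
  have interC: "\<forall>s\<in>carrier G. \<rho> s * C = C * \<rho> s"
  proof
    fix s assume s: "s \<in> carrier G"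
    have r: "\<rho> s \<in> carrier_mat d d" using rc s by simp
    have 1: "\<rho> s * (l \<cdot>\<^sub>m 1\<^sub>m d) = l \<cdot>\<^sub>m \<rho> s"
      using mult_smult_distrib[OF r one_carrier_mat[of d], of l] r by simp
    have 2: "(l \<cdot>\<^sub>m 1\<^sub>m d) * \<rho> s = l \<cdot>\<^sub>m \<rho> s"
      using mult_smult_assoc_mat[OF one_carrier_mat[of d] r, of l] r by simp
    have "\<rho> s * C = \<rho> s * A - l \<cdot>\<^sub>m \<rho> s"
      unfolding C_def using A r 1 by (subst mult_minus_distrib_mat[of _ d d]) auto
    moreover have "C * \<rho> s = A * \<rho> s - l \<cdot>\<^sub>m \<rho> s"
      unfolding C_def using A r 2 by (subst minus_mult_distrib_mat[of _ d d]) auto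
    ultimately show "\<rho> s * C = C * \<rho> s" using inter s by simp
  qed
  have "C = 0\<^sub>m d d" by (rule ker_lemma[OF irr C rc interC v(1,2) Cv])
  have "A = l \<cdot>\<^sub>m 1\<^sub>m d"
  proof (rule eq_matI)
    fix i j assume i: "i < dim_row (l \<cdot>\<^sub>m 1\<^sub>m d)" and j: "j < dim_col (l \<cdot>\<^sub>m 1\<^sub>m d)"
    have "C $$ (i,j) = 0" using \<open>C = 0\<^sub>m d d\<close> i j by simp
    moreover have "C $$ (i,j) = A $$ (i,j) - (l \<cdot>\<^sub>m 1\<^sub>m d) $$ (i,j)"
      unfolding C_def using i j by (intro index_minus_mat) auto
    ultimately show "A $$ (i,j) = (l \<cdot>\<^sub>m 1\<^sub>m d) $$ (i,j)" by simp
  qed (use A in auto)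
  then show ?thesis by blast
qed

context group
begin

lemma sum_reindex_lmult:
  assumes "s \<in> carrier G"
  shows "sum F (carrier G) = (\<Sum>h\<in>carrier G. F (s \<otimes>\<^bsub>G\<^esub> h))"
proof -
  have "bij_betw (\<lambda>h. s \<otimes>\<^bsub>G\<^esub> h) (carrier G) (carrier G)"
    by (rule bij_betw_byWitness[where f' = "\<lambda>h. inv\<^bsub>G\<^esub> s \<otimes>\<^bsub>G\<^esub> h"])
       (use assms(1) in \<open>auto simp: m_assoc[symmetric]\<close>)
  then show ?thesis by (simp add: sum.reindex_bij_betw)
qed

lemma sum_reindex_inv:
  shows "sum F (carrier G) = (\<Sum>h\<in>carrier G. F (inv\<^bsub>G\<^esub> h))"
proof -
  have "bij_betw (\<lambda>h. inv\<^bsub>G\<^esub> h) (carrier G) (carrier G)"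
    by (rule bij_betw_byWitness[where f' = "\<lambda>h. inv\<^bsub>G\<^esub> h"]) auto
  then show ?thesis by (simp add: sum.reindex_bij_betw)
qed

lemma intertw:
  fixes i j :: nat
  assumes r1: "is_rep G d \<rho>" and r2: "is_rep G d' \<sigma>"
  defines "M \<equiv> mat d d' (\<lambda>(a,b). \<Sum>h\<in>carrier G. (\<rho> h $$ (a,i) :: 'k::field) * \<sigma> (inv\<^bsub>G\<^esub> h) $$ (j,b))"
  assumes i: "i < d" and j: "j < d'"
  shows "\<forall>s\<in>carrier G. \<rho> s * M = M * \<sigma> s"
proof
  fix s assume s: "s \<in> carrier G"
  have M: "M \<in> carrier_mat d d'" by (simp add: M_def)
  have rs: "\<rho> s \<in> carrier_mat d d" and ss: "\<sigma> s \<in> carrier_mat d' d'" using r1 r2 s by (auto simp: rep_mat)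
  show "\<rho> s * M = M * \<sigma> s"
  proof (rule eq_matI)
    fix a b assume a0: "a < dim_row (M * \<sigma> s)" and b0: "b < dim_col (M * \<sigma> s)"
    have a: "a < d" and b: "b < d'" using a0 b0 M ss by auto
    have "(\<rho> s * M) $$ (a,b) = (\<Sum>c\<in>{0..<d}. \<rho> s $$ (a,c) * M $$ (c,b))"
      by (rule mm_entry[OF rs M a b])
    also have "\<dots> = (\<Sum>c\<in>{0..<d}. \<Sum>h\<in>carrier G. \<rho> s $$ (a,c) * (\<rho> h $$ (c,i) * \<sigma> (inv h) $$ (j,b)))"
      using b by (intro sum.cong refl) (simp add: M_def sum_distrib_left)
    also have "\<dots> = (\<Sum>h\<in>carrier G. \<Sum>c\<in>{0..<d}. \<rho> s $$ (a,c) * (\<rho> h $$ (c,i) * \<sigma> (inv h) $$ (j,b)))"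
      by (rule sum.swap)
    also have "\<dots> = (\<Sum>h\<in>carrier G. \<rho> (s \<otimes> h) $$ (a,i) * \<sigma> (inv h) $$ (j,b))"
    proof (intro sum.cong refl)
      fix h assume h: "h \<in> carrier G"
      have rh: "\<rho> h \<in> carrier_mat d d" using r1 h by (simp add: rep_mat)
      have "\<rho> (s \<otimes> h) $$ (a,i) = (\<Sum>c\<in>{0..<d}. \<rho> s $$ (a,c) * \<rho> h $$ (c,i))"
        using rep_mult[OF r1 s h] mm_entry[OF rs rh a i] by simp
      then show "(\<Sum>c\<in>{0..<d}. \<rho> s $$ (a,c) * (\<rho> h $$ (c,i) * \<sigma> (inv h) $$ (j,b))) =
          \<rho> (s \<otimes> h) $$ (a,i) * \<sigma> (inv h) $$ (j,b)"
        by (simp add: sum_distrib_right mult.assoc)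
    qed
    also have "\<dots> = (\<Sum>h\<in>carrier G. \<rho> h $$ (a,i) * \<sigma> (inv h \<otimes> s) $$ (j,b))"
    proof -
      have "(\<Sum>h\<in>carrier G. \<rho> h $$ (a,i) * \<sigma> (inv h \<otimes> s) $$ (j,b)) =
            (\<Sum>h\<in>carrier G. \<rho> (s \<otimes> h) $$ (a,i) * \<sigma> (inv (s \<otimes> h) \<otimes> s) $$ (j,b))"
        by (rule sum_reindex_lmult[OF s])
      also have "\<dots> = (\<Sum>h\<in>carrier G. \<rho> (s \<otimes> h) $$ (a,i) * \<sigma> (inv h) $$ (j,b))"
        using s by (intro sum.cong refl) (simp add: inv_mult_group m_assoc)
      finally show ?thesis by simp
    qed
    also have "\<dots> = (\<Sum>h\<in>carrier G. \<Sum>c\<in>{0..<d'}. \<rho> h $$ (a,i) * \<sigma> (inv h) $$ (j,c) * \<sigma> s $$ (c,b))"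
    proof (intro sum.cong refl)
      fix h assume h: "h \<in> carrier G"
      have rh: "\<sigma> (inv h) \<in> carrier_mat d' d'" using r2 h by (simp add: rep_mat)
      have "\<sigma> (inv h \<otimes> s) $$ (j,b) = (\<Sum>c\<in>{0..<d'}. \<sigma> (inv h) $$ (j,c) * \<sigma> s $$ (c,b))"
        using rep_mult[OF r2 _ s, of "inv h"] h mm_entry[OF rh ss j b] by simp
      then show "\<rho> h $$ (a,i) * \<sigma> (inv h \<otimes> s) $$ (j,b) =
          (\<Sum>c\<in>{0..<d'}. \<rho> h $$ (a,i) * \<sigma> (inv h) $$ (j,c) * \<sigma> s $$ (c,b))"
        by (simp add: sum_distrib_left mult.assoc)
    qed
    also have "\<dots> = (\<Sum>c\<in>{0..<d'}. \<Sum>h\<in>carrier G. \<rho> h $$ (a,i) * \<sigma> (inv h) $$ (j,c) * \<sigma> s $$ (c,b))"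
      by (rule sum.swap)
    also have "\<dots> = (\<Sum>c\<in>{0..<d'}. M $$ (a,c) * \<sigma> s $$ (c,b))"
      using a by (intro sum.cong refl) (simp add: M_def sum_distrib_right)
    also have "\<dots> = (M * \<sigma> s) $$ (a,b)"
      by (rule mm_entry[OF M ss a b, symmetric])
    finally show "(\<rho> s * M) $$ (a,b) = (M * \<sigma> s) $$ (a,b)" .
  qed (use M rs ss in auto)
qed

lemma orth_diff:
  assumes irr1: "irreducible_rep G d \<rho>" and irr2: "irreducible_rep G d' \<sigma>"
    and ne: "rep_character G \<rho> \<noteq> rep_character G (\<sigma> :: 'a \<Rightarrow> 'k::field mat)"
    and i: "i < d" and j: "j < d'" and a: "a < d" and b: "b < d'"
  shows "(\<Sum>h\<in>carrier G. \<rho> h $$ (a,i) * \<sigma> (inv\<^bsub>G\<^esub> h) $$ (j,b)) = 0"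
proof -
  have r1: "is_rep G d \<rho>" and r2: "is_rep G d' \<sigma>" using irr1 irr2 by (auto simp: irreducible_rep_def)
  define M where "M = mat d d' (\<lambda>(a,b). \<Sum>h\<in>carrier G. \<rho> h $$ (a,i) * \<sigma> (inv\<^bsub>G\<^esub> h) $$ (j,b))"
  have M: "M \<in> carrier_mat d d'" by (simp add: M_def)
  have inter: "\<forall>s\<in>carrier G. \<rho> s * M = M * \<sigma> s"
    unfolding M_def by (rule intertw[OF r1 r2 i j])
  have "M = 0\<^sub>m d d'"
    using schur1[OF irr1 irr2 M inter] ne by blast
  then have "M $$ (a,b) = 0" using a b by simp
  then show ?thesis using a b by (simp add: M_def)
qed

lemma orth_same:
  assumes ac: "alg_closed_field TYPE('k::field_char_0)"
    and irr: "irreducible_rep G d (\<rho> :: 'a \<Rightarrow> 'k mat)"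
    and i: "i < d" and j: "j < d" and a: "a < d" and b: "b < d"
  shows "(\<Sum>h\<in>carrier G. \<rho> h $$ (a,i) * \<rho> (inv\<^bsub>G\<^esub> h) $$ (j,b)) =
           (if a = b \<and> i = j then of_nat (card (carrier G)) / of_nat d else 0)"
proof -
  have r: "is_rep G d \<rho>" and d: "d > 0" using irr by (auto simp: irreducible_rep_def)
  define M where "M = mat d d (\<lambda>(a,b). \<Sum>h\<in>carrier G. \<rho> h $$ (a,i) * \<rho> (inv\<^bsub>G\<^esub> h) $$ (j,b))"
  have M: "M \<in> carrier_mat d d" by (simp add: M_def)
  have inter: "\<forall>s\<in>carrier G. \<rho> s * M = M * \<rho> s"
    unfolding M_def by (rule intertw[OF r r i j])
  obtain l where l: "M = l \<cdot>\<^sub>m 1\<^sub>m d" using schur2[OF ac irr M inter] by blast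
  have Mab: "\<And>a b. a < d \<Longrightarrow> b < d \<Longrightarrow> M $$ (a,b) = (if a = b then l else 0)"
    using l by simp
  have "(\<Sum>a\<in>{0..<d}. M $$ (a,a)) = of_nat d * l" using Mab by simp
  moreover have "(\<Sum>a\<in>{0..<d}. M $$ (a,a)) = of_nat (card (carrier G)) * (if j = i then 1 else 0)"
  proof -
    have "(\<Sum>a\<in>{0..<d}. M $$ (a,a)) = (\<Sum>a\<in>{0..<d}. \<Sum>h\<in>carrier G. \<rho> h $$ (a,i) * \<rho> (inv h) $$ (j,a))"
      by (intro sum.cong refl) (simp add: M_def)
    also have "\<dots> = (\<Sum>h\<in>carrier G. \<Sum>a\<in>{0..<d}. \<rho> (inv h) $$ (j,a) * \<rho> h $$ (a,i))"
      by (subst sum.swap) (simp add: mult.commute)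
    also have "\<dots> = (\<Sum>h\<in>carrier G. (if j = i then 1 else 0))"
    proof (intro sum.cong refl)
      fix h assume h: "h \<in> carrier G"
      have "(\<Sum>a\<in>{0..<d}. \<rho> (inv h) $$ (j,a) * \<rho> h $$ (a,i)) = (\<rho> (inv h) * \<rho> h) $$ (j,i)"
        using h r i j by (intro mm_entry[of "\<rho> (inv h)" d d "\<rho> h" d j i, symmetric]) (auto simp: rep_mat)
      also have "\<dots> = 1\<^sub>m d $$ (j,i)" using rep_inv[OF is_group r h] by simp
      finally show "(\<Sum>a\<in>{0..<d}. \<rho> (inv h) $$ (j,a) * \<rho> h $$ (a,i)) = (if j = i then 1 else 0)"
        using i j by simp
    qed
    finally show ?thesis by simp
  qed
  ultimately have dl: "of_nat d * l = of_nat (card (carrier G)) * (if j = i then 1 else 0)" by simp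
  have "(of_nat d :: 'k) \<noteq> 0" using d by simp
  then have "l = (if i = j then of_nat (card (carrier G)) / of_nat d else 0)"
    using dl by (auto simp: field_simps)
  then have "M $$ (a,b) = (if a = b \<and> i = j then of_nat (card (carrier G)) / of_nat d else 0)"
    using Mab[OF a b] by auto
  then show ?thesis using a b by (simp add: M_def)
qed

end

lemma sum4:
  fixes f :: "'s \<Rightarrow> 'j \<Rightarrow> 'k::comm_ring_1"
  shows "(\<Sum>s\<in>A. (\<Sum>j\<in>J. f s j) * (\<Sum>a\<in>K. \<Sum>b\<in>L. X a b * g s a b)) =
         (\<Sum>j\<in>J. \<Sum>a\<in>K. \<Sum>b\<in>L. X a b * (\<Sum>s\<in>A. g s a b * f s j))"
proof -
  have "(\<Sum>s\<in>A. (\<Sum>j\<in>J. f s j) * (\<Sum>a\<in>K. \<Sum>b\<in>L. X a b * g s a b)) =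
        (\<Sum>s\<in>A. \<Sum>j\<in>J. f s j * (\<Sum>a\<in>K. \<Sum>b\<in>L. X a b * g s a b))"
    by (simp only: sum_distrib_right)
  also have "\<dots> = (\<Sum>s\<in>A. \<Sum>j\<in>J. \<Sum>a\<in>K. \<Sum>b\<in>L. f s j * (X a b * g s a b))"
    by (simp only: sum_distrib_left)
  also have "\<dots> = (\<Sum>j\<in>J. \<Sum>s\<in>A. \<Sum>a\<in>K. \<Sum>b\<in>L. f s j * (X a b * g s a b))"
    by (rule sum.swap)
  also have "\<dots> = (\<Sum>j\<in>J. \<Sum>a\<in>K. \<Sum>s\<in>A. \<Sum>b\<in>L. f s j * (X a b * g s a b))"
    by (intro sum.cong refl) (rule sum.swap)
  also have "\<dots> = (\<Sum>j\<in>J. \<Sum>a\<in>K. \<Sum>b\<in>L. \<Sum>s\<in>A. f s j * (X a b * g s a b))"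
    by (intro sum.cong refl) (rule sum.swap)
  also have "\<dots> = (\<Sum>j\<in>J. \<Sum>a\<in>K. \<Sum>b\<in>L. X a b * (\<Sum>s\<in>A. g s a b * f s j))"
    by (simp add: sum_distrib_left mult.commute mult.left_commute)
  finally show ?thesis .
qed

lemma irr_chars_obtain:
  assumes "\<psi> \<in> irr_chars G"
  obtains d \<rho> where "irreducible_rep G d \<rho>" "\<psi> = rep_character G \<rho>"
  using assms unfolding irr_chars_def by blast

lemma char_val:
  assumes "irreducible_rep G d \<rho>" "x \<in> carrier G"
  shows "rep_character G \<rho> x = (\<Sum>a\<in>{0..<d}. \<rho> x $$ (a,a))"
proof -
  have "is_rep G d \<rho>" using assms(1) by (simp add: irreducible_rep_def)
  then have "\<rho> x \<in> carrier_mat d d" using assms(2) by (rule rep_mat)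
  then show ?thesis using assms(2) by (simp add: rep_character_def mat_trace_alt)
qed

context group
begin

lemma char_one:
  assumes "irreducible_rep G d (\<rho> :: 'a \<Rightarrow> 'k::field mat)"
  shows "rep_character G \<rho> \<one> = of_nat d"
proof -
  have "\<rho> \<one> = 1\<^sub>m d" using assms by (simp add: irreducible_rep_def is_rep_def)
  then show ?thesis using char_val[OF assms one_closed] by simp
qed

lemma char_expand:
  assumes irr1: "irreducible_rep G d \<rho>" and irr2: "irreducible_rep G d' (\<sigma> :: 'a \<Rightarrow> 'k::field mat)"
    and u: "u \<in> carrier G"
  shows "(\<Sum>s\<in>carrier G. rep_character G \<sigma> (inv s) * rep_character G \<rho> (inv u \<otimes> s)) =
     (\<Sum>j\<in>{0..<d'}. \<Sum>a\<in>{0..<d}. \<Sum>b\<in>{0..<d}. \<rho> (inv u) $$ (a,b) * (\<Sum>s\<in>carrier G. \<rho> s $$ (b,a) * \<sigma> (inv s) $$ (j,j)))"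
proof -
  have r1: "is_rep G d \<rho>" using irr1 by (simp add: irreducible_rep_def)
  have "(\<Sum>s\<in>carrier G. rep_character G \<sigma> (inv s) * rep_character G \<rho> (inv u \<otimes> s)) =
     (\<Sum>s\<in>carrier G. (\<Sum>j\<in>{0..<d'}. \<sigma> (inv s) $$ (j,j)) * (\<Sum>a\<in>{0..<d}. \<Sum>b\<in>{0..<d}. \<rho> (inv u) $$ (a,b) * \<rho> s $$ (b,a)))"
  proof (intro sum.cong refl)
    fix s assume s: "s \<in> carrier G"
    have "rep_character G \<rho> (inv u \<otimes> s) = (\<Sum>a\<in>{0..<d}. \<rho> (inv u \<otimes> s) $$ (a,a))"
      using s u by (intro char_val[OF irr1]) auto
    also have "\<dots> = (\<Sum>a\<in>{0..<d}. \<Sum>b\<in>{0..<d}. \<rho> (inv u) $$ (a,b) * \<rho> s $$ (b,a))"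
    proof (intro sum.cong refl)
      fix a assume "a \<in> {0..<d}"
      then have a: "a < d" by simp
      have "\<rho> (inv u \<otimes> s) = \<rho> (inv u) * \<rho> s" using u s r1 by (simp add: rep_mult)
      then show "\<rho> (inv u \<otimes> s) $$ (a,a) = (\<Sum>b\<in>{0..<d}. \<rho> (inv u) $$ (a,b) * \<rho> s $$ (b,a))"
        using u s r1 a by (simp add: mm_entry[of _ d d _ d] rep_mat)
    qed
    finally show "rep_character G \<sigma> (inv s) * rep_character G \<rho> (inv u \<otimes> s) =
       (\<Sum>j\<in>{0..<d'}. \<sigma> (inv s) $$ (j,j)) * (\<Sum>a\<in>{0..<d}. \<Sum>b\<in>{0..<d}. \<rho> (inv u) $$ (a,b) * \<rho> s $$ (b,a))"
      using char_val[OF irr2, of "inv s"] s by simp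
  qed
  also have "\<dots> = (\<Sum>j\<in>{0..<d'}. \<Sum>a\<in>{0..<d}. \<Sum>b\<in>{0..<d}. \<rho> (inv u) $$ (a,b) * (\<Sum>s\<in>carrier G. \<rho> s $$ (b,a) * \<sigma> (inv s) $$ (j,j)))"
    by (rule sum4)
  finally show ?thesis .
qed

lemma char_orth:
  assumes ac: "alg_closed_field TYPE('k::field_char_0)"
    and phi: "\<phi> \<in> irr_chars G" and psi: "(\<psi> :: 'a \<Rightarrow> 'k) \<in> irr_chars G" and u: "u \<in> carrier G"
  shows "(\<Sum>s\<in>carrier G. \<phi> (inv s) * \<psi> (inv u \<otimes> s)) =
     (if \<phi> = \<psi> then of_nat (card (carrier G)) / \<psi> \<one> * \<psi> (inv u) else 0)"
proof -
  obtain d \<rho> where irr1: "irreducible_rep G d \<rho>" and psi_def: "\<psi> = rep_character G \<rho>"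
    using psi by (rule irr_chars_obtain)
  obtain d' \<sigma> where irr2: "irreducible_rep G d' \<sigma>" and phi_def: "\<phi> = rep_character G \<sigma>"
    using phi by (rule irr_chars_obtain)
  show ?thesis
  proof (cases "\<phi> = \<psi>")
    case False
    have "(\<Sum>s\<in>carrier G. \<phi> (inv s) * \<psi> (inv u \<otimes> s)) =
      (\<Sum>j\<in>{0..<d'}. \<Sum>a\<in>{0..<d}. \<Sum>b\<in>{0..<d}. \<rho> (inv u) $$ (a,b) * (\<Sum>s\<in>carrier G. \<rho> s $$ (b,a) * \<sigma> (inv s) $$ (j,j)))"
      unfolding phi_def psi_def by (rule char_expand[OF irr1 irr2 u])
    also have "\<dots> = 0"
    proof (intro sum.neutral ballI)
      fix j a b assume "j \<in> {0..<d'}" "a \<in> {0..<d}" "b \<in> {0..<d}"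
      then have "(\<Sum>s\<in>carrier G. \<rho> s $$ (b,a) * \<sigma> (inv s) $$ (j,j)) = 0"
        using False unfolding phi_def psi_def by (intro orth_diff[OF irr1 irr2]) auto
      then show "\<rho> (inv u) $$ (a,b) * (\<Sum>s\<in>carrier G. \<rho> s $$ (b,a) * \<sigma> (inv s) $$ (j,j)) = 0" by simp
    qed
    finally show ?thesis using False by simp
  next
    case True
    let ?c = "of_nat (card (carrier G)) / of_nat d :: 'k"
    have "(\<Sum>s\<in>carrier G. \<phi> (inv s) * \<psi> (inv u \<otimes> s)) =
      (\<Sum>j\<in>{0..<d}. \<Sum>a\<in>{0..<d}. \<Sum>b\<in>{0..<d}. \<rho> (inv u) $$ (a,b) * (\<Sum>s\<in>carrier G. \<rho> s $$ (b,a) * \<rho> (inv s) $$ (j,j)))"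
      unfolding True psi_def by (rule char_expand[OF irr1 irr1 u])
    also have "\<dots> = (\<Sum>j\<in>{0..<d}. \<Sum>a\<in>{0..<d}. \<Sum>b\<in>{0..<d}. (if b = j then (if a = j then \<rho> (inv u) $$ (a,b) * ?c else 0) else 0))"
    proof (intro sum.cong refl)
      fix j a b assume "j \<in> {0..<d}" "a \<in> {0..<d}" "b \<in> {0..<d}"
      then show "\<rho> (inv u) $$ (a,b) * (\<Sum>s\<in>carrier G. \<rho> s $$ (b,a) * \<rho> (inv s) $$ (j,j)) =
          (if b = j then (if a = j then \<rho> (inv u) $$ (a,b) * ?c else 0) else 0)"
        using orth_same[OF ac irr1, of a j b j] by auto
    qed
    also have "\<dots> = (\<Sum>j\<in>{0..<d}. \<rho> (inv u) $$ (j,j) * ?c)"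
      by (intro sum.cong refl) (simp add: sum.delta')
    also have "\<dots> = (\<Sum>j\<in>{0..<d}. \<rho> (inv u) $$ (j,j)) * ?c"
      by (rule sum_distrib_right[symmetric])
    also have "\<dots> = ?c * \<psi> (inv u)"
      using char_val[OF irr1, of "inv u"] u by (simp add: psi_def)
    finally show ?thesis using True char_one[OF irr1] by (simp add: psi_def)
  qed
qed

end

definition conv :: "('g, 'b) monoid_scheme \<Rightarrow> ('g \<Rightarrow> 'k::comm_ring_1) \<Rightarrow> ('g \<Rightarrow> 'k) \<Rightarrow> 'g \<Rightarrow> 'k" where
  "conv G a b u = (\<Sum>s\<in>carrier G. a s * b (inv\<^bsub>G\<^esub> s \<otimes>\<^bsub>G\<^esub> u))"

definition ehat :: "('g, 'b) monoid_scheme \<Rightarrow> ('g \<Rightarrow> 'k::field) \<Rightarrow> 'g \<Rightarrow> 'k" where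
  "ehat G \<psi> u = \<psi> \<one>\<^bsub>G\<^esub> / of_nat (card (carrier G)) * \<psi> (inv\<^bsub>G\<^esub> u)"

context group
begin

lemma conv_cong:
  assumes "u \<in> carrier G" "\<And>x. x \<in> carrier G \<Longrightarrow> a x = a' x" "\<And>x. x \<in> carrier G \<Longrightarrow> b x = b' x"
  shows "conv G a b u = conv G a' b' u"
  unfolding conv_def using assms by (intro sum.cong refl) auto

lemma conv_zero_left:
  assumes "\<And>x. x \<in> carrier G \<Longrightarrow> a x = 0"
  shows "conv G a b u = 0"
  unfolding conv_def using assms by simp

lemma conv_add_left:
  "conv G (\<lambda>x. a x + b x) c u = conv G a c u + conv G b c u"
  unfolding conv_def by (simp add: distrib_right sum.distrib)

lemma conv_sum_left:
  "conv G (\<lambda>x. \<Sum>i\<in>T. a i x) c u = (\<Sum>i\<in>T. conv G (a i) c u)"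
  unfolding conv_def by (simp add: sum_distrib_right) (rule sum.swap)

lemma conv_assoc:
  assumes u: "u \<in> carrier G"
  shows "conv G (conv G a b) c u = conv G a (conv G b c) u"
proof -
  have "conv G (conv G a b) c u = (\<Sum>s\<in>carrier G. \<Sum>t\<in>carrier G. a t * b (inv t \<otimes> s) * c (inv s \<otimes> u))"
    unfolding conv_def by (simp add: sum_distrib_right)
  also have "\<dots> = (\<Sum>t\<in>carrier G. \<Sum>s\<in>carrier G. a t * b (inv t \<otimes> s) * c (inv s \<otimes> u))"
    by (rule sum.swap)
  also have "\<dots> = (\<Sum>t\<in>carrier G. \<Sum>r\<in>carrier G. a t * b r * c (inv r \<otimes> (inv t \<otimes> u)))"
  proof (rule sum.cong[OF refl])
    fix t assume t: "t \<in> carrier G"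
    have "(\<Sum>s\<in>carrier G. a t * b (inv t \<otimes> s) * c (inv s \<otimes> u)) =
          (\<Sum>r\<in>carrier G. a t * b (inv t \<otimes> (t \<otimes> r)) * c (inv (t \<otimes> r) \<otimes> u))"
      by (rule sum_reindex_lmult[OF t])
    also have "\<dots> = (\<Sum>r\<in>carrier G. a t * b r * c (inv r \<otimes> (inv t \<otimes> u)))"
      using t u by (intro sum.cong refl) (simp add: inv_mult_group m_assoc[symmetric])
    finally show "(\<Sum>s\<in>carrier G. a t * b (inv t \<otimes> s) * c (inv s \<otimes> u)) =
          (\<Sum>r\<in>carrier G. a t * b r * c (inv r \<otimes> (inv t \<otimes> u)))" .
  qed
  also have "\<dots> = conv G a (conv G b c) u"
    unfolding conv_def by (simp add: sum_distrib_left mult.assoc)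
  finally show ?thesis .
qed

lemma tw_conv:
  assumes u: "u \<in> carrier G"
    and chi: "\<forall>s\<in>carrier G. \<forall>t\<in>carrier G. \<chi> (s \<otimes> t) = \<chi> s * (\<chi> t :: 'k::comm_ring_1)"
  shows "\<chi> u ^ m * conv G a b u = conv G (\<lambda>x. \<chi> x ^ m * a x) (\<lambda>x. \<chi> x ^ m * b x) u"
proof -
  have "\<chi> u ^ m * conv G a b u = (\<Sum>s\<in>carrier G. \<chi> u ^ m * (a s * b (inv s \<otimes> u)))"
    unfolding conv_def by (simp add: sum_distrib_left)
  also have "\<dots> = conv G (\<lambda>x. \<chi> x ^ m * a x) (\<lambda>x. \<chi> x ^ m * b x) u"
    unfolding conv_def
  proof (intro sum.cong refl)
    fix s assume s: "s \<in> carrier G"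
    have "\<chi> u = \<chi> (s \<otimes> (inv s \<otimes> u))" using s u by (simp add: m_assoc[symmetric])
    also have "\<dots> = \<chi> s * \<chi> (inv s \<otimes> u)" using chi s u by simp
    finally have "\<chi> u ^ m = \<chi> s ^ m * \<chi> (inv s \<otimes> u) ^ m" by (simp add: power_mult_distrib)
    then show "\<chi> u ^ m * (a s * b (inv s \<otimes> u)) = \<chi> s ^ m * a s * (\<chi> (inv s \<otimes> u) ^ m * b (inv s \<otimes> u))"
      by (simp add: mult_ac)
  qed
  finally show ?thesis .
qed

lemma char_class:
  assumes psi: "\<psi> \<in> irr_chars G" and x: "x \<in> carrier G" and y: "y \<in> carrier G"
  shows "(\<psi> :: 'a \<Rightarrow> 'k::field) (x \<otimes> y) = \<psi> (y \<otimes> x)"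
proof -
  obtain d \<rho> where irr: "irreducible_rep G d \<rho>" and psi_def: "\<psi> = rep_character G \<rho>"
    using psi by (rule irr_chars_obtain)
  have r: "is_rep G d \<rho>" using irr by (simp add: irreducible_rep_def)
  have "\<psi> (x \<otimes> y) = mat_trace (\<rho> x * \<rho> y)"
    using x y r by (simp add: psi_def rep_character_def rep_mult)
  also have "\<dots> = mat_trace (\<rho> y * \<rho> x)"
    using x y r by (intro trace_comm[of _ d d]) (auto simp: rep_mat)
  also have "\<dots> = \<psi> (y \<otimes> x)"
    using x y r by (simp add: psi_def rep_character_def rep_mult)
  finally show ?thesis .
qed

lemma ehat_central:
  assumes psi: "\<psi> \<in> irr_chars G" and u: "u \<in> carrier G"
  shows "conv G (ehat G (\<psi> :: 'a \<Rightarrow> 'k::field)) b u = conv G b (ehat G \<psi>) u"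
proof -
  let ?c = "\<psi> \<one> / of_nat (card (carrier G))"
  have "conv G (ehat G \<psi>) b u = (\<Sum>s\<in>carrier G. ?c * \<psi> (inv s) * b (inv s \<otimes> u))"
    unfolding conv_def ehat_def by simp
  also have "\<dots> = (\<Sum>s\<in>carrier G. ?c * \<psi> (inv (u \<otimes> inv s)) * b (inv (u \<otimes> inv s) \<otimes> u))"
  proof -
    have "(\<Sum>s\<in>carrier G. ?c * \<psi> (inv s) * b (inv s \<otimes> u)) =
          (\<Sum>s\<in>carrier G. ?c * \<psi> (inv (u \<otimes> s)) * b (inv (u \<otimes> s) \<otimes> u))"
      by (rule sum_reindex_lmult[OF u])
    also have "\<dots> = (\<Sum>s\<in>carrier G. ?c * \<psi> (inv (u \<otimes> inv s)) * b (inv (u \<otimes> inv s) \<otimes> u))"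
      by (rule sum_reindex_inv)
    finally show ?thesis .
  qed
  also have "\<dots> = (\<Sum>s\<in>carrier G. b s * (?c * \<psi> (inv u \<otimes> s)))"
  proof (intro sum.cong refl)
    fix s assume s: "s \<in> carrier G"
    have "inv (u \<otimes> inv s) = s \<otimes> inv u" using s u by (simp add: inv_mult_group)
    moreover have "inv (u \<otimes> inv s) \<otimes> u = s" using s u by (simp add: inv_mult_group m_assoc)
    moreover have "\<psi> (s \<otimes> inv u) = \<psi> (inv u \<otimes> s)" using s u by (intro char_class[OF psi]) auto
    ultimately show "?c * \<psi> (inv (u \<otimes> inv s)) * b (inv (u \<otimes> inv s) \<otimes> u) = b s * (?c * \<psi> (inv u \<otimes> s))"
      by (simp add: mult_ac)
  qed
  also have "\<dots> = conv G b (ehat G \<psi>) u"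
    unfolding conv_def ehat_def using u by (intro sum.cong refl) (simp add: inv_mult_group)
  finally show ?thesis .
qed

lemma irr_char_one_nz:
  assumes "\<psi> \<in> irr_chars G"
  shows "(\<psi> :: 'a \<Rightarrow> 'k::field_char_0) \<one> \<noteq> 0"
proof -
  obtain d \<rho> where irr: "irreducible_rep G d \<rho>" and psi_def: "\<psi> = rep_character G \<rho>"
    using assms by (rule irr_chars_obtain)
  have "d > 0" using irr by (simp add: irreducible_rep_def)
  then show ?thesis using char_one[OF irr] psi_def by simp
qed

lemma ehat_mult:
  assumes ac: "alg_closed_field TYPE('k::field_char_0)" and fin: "finite (carrier G)"
    and phi: "\<phi> \<in> irr_chars G" and psi: "(\<psi> :: 'a \<Rightarrow> 'k) \<in> irr_chars G" and u: "u \<in> carrier G"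
  shows "conv G (ehat G \<phi>) (ehat G \<psi>) u = (if \<phi> = \<psi> then ehat G \<psi> u else 0)"
proof -
  let ?N = "of_nat (card (carrier G)) :: 'k"
  have N: "?N \<noteq> 0" using fin by (simp add: card_gt_0_iff[symmetric]) (use one_closed in blast)
  have p1: "\<psi> \<one> \<noteq> 0" by (rule irr_char_one_nz[OF psi])
  have "conv G (ehat G \<phi>) (ehat G \<psi>) u =
        \<phi> \<one> / ?N * (\<psi> \<one> / ?N) * (\<Sum>s\<in>carrier G. \<phi> (inv s) * \<psi> (inv u \<otimes> s))"
    unfolding conv_def ehat_def sum_distrib_left
    using u by (intro sum.cong refl) (simp add: inv_mult_group mult_ac)
  also have "\<dots> = (if \<phi> = \<psi> then ehat G \<psi> u else 0)"
    using char_orth[OF ac phi psi u] N p1 by (auto simp: ehat_def field_simps power2_eq_square)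
  finally show ?thesis .
qed

lemma char_orth1:
  assumes ac: "alg_closed_field TYPE('k::field_char_0)"
    and phi: "\<phi> \<in> irr_chars G" and psi: "(\<psi> :: 'a \<Rightarrow> 'k) \<in> irr_chars G"
  shows "(\<Sum>s\<in>carrier G. \<phi> (inv s) * \<psi> s) = (if \<phi> = \<psi> then of_nat (card (carrier G)) else 0)"
  using char_orth[OF ac phi psi one_closed] irr_char_one_nz[OF psi] by simp

end

lemma sum_fun_apply: "(\<Sum>i\<in>A. f i) x = (\<Sum>i\<in>A. f i x)"
  by (induct A rule: infinite_finite_induct) auto

lemma irr_char_outside:
  assumes "\<psi> \<in> irr_chars G" "x \<notin> carrier G"
  shows "\<psi> x = undefined"
  using assms unfolding irr_chars_def rep_character_def by auto

lemma vs_fun: "vector_space (\<lambda>(c::'k::field) (f::'a \<Rightarrow> 'k). (\<lambda>x. c * f x))"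
  by unfold_locales (auto simp: fun_eq_iff algebra_simps)

context group
begin

lemma irr_chars_finite:
  assumes ac: "alg_closed_field TYPE('k::field_char_0)" and fin: "finite (carrier G)"
  shows "finite (irr_chars G :: ('a \<Rightarrow> 'k) set)"
proof -
  interpret V: vector_space "\<lambda>(c::'k) (f::'a \<Rightarrow> 'k). (\<lambda>x. c * f x)" by (rule vs_fun)
  define restr :: "('a \<Rightarrow> 'k) \<Rightarrow> 'a \<Rightarrow> 'k" where "restr = (\<lambda>\<psi> x. if x \<in> carrier G then \<psi> x else 0)"
  define del :: "'a \<Rightarrow> 'a \<Rightarrow> 'k" where "del = (\<lambda>g x. if x = g then 1 else 0)"
  let ?Z = "restr ` irr_chars G"
  let ?T = "del ` carrier G"
  have inj: "inj_on restr (irr_chars G)"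
  proof (rule inj_onI)
    fix \<phi> \<psi> assume phi: "\<phi> \<in> irr_chars G" and psi: "\<psi> \<in> irr_chars G" and eq: "restr \<phi> = restr \<psi>"
    show "\<phi> = \<psi>"
    proof
      fix x show "\<phi> x = \<psi> x"
      proof (cases "x \<in> carrier G")
        case True
        then show ?thesis using fun_cong[OF eq, of x] by (simp add: restr_def)
      next
        case False
        then show ?thesis using irr_char_outside[OF phi] irr_char_outside[OF psi] by simp
      qed
    qed
  qed
  have span: "?Z \<subseteq> V.span ?T"
  proof
    fix f assume "f \<in> ?Z"
    then obtain \<psi> where f: "f = restr \<psi>" by blast
    have "f = (\<Sum>g\<in>carrier G. (\<lambda>x. \<psi> g * del g x))"
    proof
      fix x
      show "f x = (\<Sum>g\<in>carrier G. (\<lambda>x. \<psi> g * del g x)) x"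
        unfolding sum_fun_apply f restr_def del_def using fin
        by (simp add: if_distrib[of "\<lambda>z. _ * z"] sum.delta' cong: if_cong)
    qed
    also have "\<dots> \<in> V.span ?T"
      by (intro V.span_sum V.span_scale V.span_base) auto
    finally show "f \<in> V.span ?T" .
  qed
  have indep: "V.independent ?Z"
    unfolding V.independent_explicit_finite_subsets
  proof (intro allI impI ballI)
    fix S u v0 assume S: "S \<subseteq> ?Z" and finS: "finite S"
      and sum0: "(\<Sum>v\<in>S. (\<lambda>x. u v * v x)) = 0" and v0: "v0 \<in> S"
    obtain \<psi>0 where psi0: "\<psi>0 \<in> irr_chars G" and v0d: "v0 = restr \<psi>0" using S v0 by blast
    have pt: "(\<Sum>v\<in>S. u v * v x) = 0" for x
      using fun_cong[OF sum0, of x] by (simp add: sum_fun_apply)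
    have ortho: "(\<Sum>s\<in>carrier G. v (inv s) * \<psi>0 s) = (if v = v0 then of_nat (card (carrier G)) else 0)"
      if v: "v \<in> S" for v
    proof -
      obtain \<phi> where phi: "\<phi> \<in> irr_chars G" and vd: "v = restr \<phi>" using S v by blast
      have "(\<Sum>s\<in>carrier G. v (inv s) * \<psi>0 s) = (\<Sum>s\<in>carrier G. \<phi> (inv s) * \<psi>0 s)"
        by (intro sum.cong refl) (simp add: vd restr_def)
      also have "\<dots> = (if \<phi> = \<psi>0 then of_nat (card (carrier G)) else 0)"
        by (rule char_orth1[OF ac phi psi0])
      also have "(\<phi> = \<psi>0) = (v = v0)" using inj phi psi0 vd v0d by (auto dest: inj_onD)
      finally show ?thesis .
    qed
    have "0 = (\<Sum>s\<in>carrier G. (\<Sum>v\<in>S. u v * v (inv s)) * \<psi>0 s)"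
      using pt by simp
    also have "\<dots> = (\<Sum>v\<in>S. u v * (\<Sum>s\<in>carrier G. v (inv s) * \<psi>0 s))"
      by (simp add: sum_distrib_left sum_distrib_right mult.assoc) (rule sum.swap)
    also have "\<dots> = (\<Sum>v\<in>S. (if v = v0 then u v * of_nat (card (carrier G)) else 0))"
      using ortho by (intro sum.cong refl) auto
    also have "\<dots> = u v0 * of_nat (card (carrier G))" using finS v0 by (simp add: sum.delta')
    finally have "u v0 * of_nat (card (carrier G)) = 0" by simp
    moreover have "(of_nat (card (carrier G)) :: 'k) \<noteq> 0"
      using fin by (simp add: card_gt_0_iff[symmetric]) (use one_closed in blast)
    ultimately show "u v0 = 0" by simp
  qed
  have "finite ?Z" using V.independent_span_bound[OF _ indep span] fin by auto
  then show ?thesis using finite_imageD[OF _ inj] by blast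
qed

end

lemma Hmult_carrier: "Hmult G \<chi> n a b \<in> Hcarrier G n"
  unfolding Hmult_def Hcarrier_def by auto

lemma gen_mem: "x \<in> Hideal_gen G \<chi> n x"
  unfolding Hideal_gen_def by blast

lemma sum_single:
  assumes "finite A" "\<And>i. i \<in> A \<Longrightarrow> i \<noteq> k \<Longrightarrow> g i = 0"
  shows "sum g A = (if k \<in> A then g k else 0)"
proof -
  have "sum g A = (\<Sum>i\<in>A. if i = k then g k else 0)"
    using assms(2) by (intro sum.cong refl) auto
  then show ?thesis using assms(1) by (simp add: sum.delta')
qed

context group
begin

lemma chi_one:
  assumes chi0: "\<forall>s\<in>carrier G. \<chi> s \<noteq> (0 :: 'k::field)"
    and chi: "\<forall>s\<in>carrier G. \<forall>t\<in>carrier G. \<chi> (s \<otimes> t) = \<chi> s * \<chi> t"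
  shows "\<chi> \<one> = 1"
proof -
  have "\<chi> \<one> = \<chi> \<one> * \<chi> \<one>" using chi one_closed by (metis l_one)
  moreover have "\<chi> \<one> \<noteq> 0" using chi0 by simp
  ultimately show ?thesis by (metis mult_cancel_left1)
qed

lemma xform:
  assumes mn: "m < n" and fin: "finite (carrier G)"
  shows "Hmult G \<chi> n (Hbasis \<one> m) (idem_sum G T) u j =
    (if u \<in> carrier G \<and> j = m then \<chi> u ^ m * (\<Sum>\<phi>\<in>T. ehat G \<phi> u) else (0::'k::field))"
proof (cases "u \<in> carrier G \<and> j < n")
  case False
  then show ?thesis using mn by (auto simp: Hmult_def)
next
  case True
  then have u: "u \<in> carrier G" and jn: "j < n" by auto
  let ?Y = "\<lambda>s i. idem_sum G T (inv s \<otimes> u) (j - i) * \<chi> (inv s \<otimes> u) ^ i"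
  have "Hmult G \<chi> n (Hbasis \<one> m) (idem_sum G T) u j =
        (\<Sum>s\<in>carrier G. \<Sum>i\<le>j. Hbasis \<one> m s i * ?Y s i)"
    using True by (simp add: Hmult_def mult.assoc)
  also have "\<dots> = (\<Sum>s\<in>carrier G. if s = \<one> then (if m \<le> j then ?Y s m else 0) else 0)"
  proof (rule sum.cong[OF refl])
    fix s assume s: "s \<in> carrier G"
    have "(\<Sum>i\<le>j. Hbasis \<one> m s i * ?Y s i) = (if m \<in> {..j} then Hbasis \<one> m s m * ?Y s m else 0)"
      by (rule sum_single) (auto simp: Hbasis_def)
    then show "(\<Sum>i\<le>j. Hbasis \<one> m s i * ?Y s i) = (if s = \<one> then (if m \<le> j then ?Y s m else 0) else 0)"
      by (auto simp: Hbasis_def)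
  qed
  also have "\<dots> = (if m \<le> j then ?Y \<one> m else 0)"
    using fin by (simp add: sum.delta')
  also have "\<dots> = (if j = m then \<chi> u ^ m * (\<Sum>\<phi>\<in>T. ehat G \<phi> u) else 0)"
    using u by (auto simp: idem_sum_def char_idem_def ehat_def sum.If_cases mult.commute)
  finally show ?thesis using u by simp
qed

lemma key:
  assumes ac: "alg_closed_field TYPE('k::field_char_0)" and fin: "finite (carrier G)"
    and chi0: "\<forall>s\<in>carrier G. \<chi> s \<noteq> (0 :: 'k)"
    and chi: "\<forall>s\<in>carrier G. \<forall>t\<in>carrier G. \<chi> (s \<otimes> t) = \<chi> s * \<chi> t"
    and mn: "m < n"
    and S: "S \<subseteq> irr_chars G" and T: "T \<subseteq> irr_chars G"
    and psiS: "\<psi> \<in> S" and psiT: "\<psi> \<notin> T"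
  shows "Hmult G \<chi> n (Hbasis \<one> m) (idem_sum G S) \<notin> Hideal_gen G \<chi> n (Hmult G \<chi> n (Hbasis \<one> m) (idem_sum G T))"
proof -
  let ?xS = "Hmult G \<chi> n (Hbasis \<one> m) (idem_sum G S)"
  let ?xT = "Hmult G \<chi> n (Hbasis \<one> m) (idem_sum G T)"
  have psi: "\<psi> \<in> irr_chars G" using S psiS by auto
  have finirr: "finite (irr_chars G :: ('a \<Rightarrow> 'k) set)" by (rule irr_chars_finite[OF ac fin])
  have finS: "finite S" and finT: "finite T" using finite_subset[OF S finirr] finite_subset[OF T finirr] by auto
  define e where "e = (\<lambda>v. \<chi> v ^ m * ehat G \<psi> v)"
  define I where "I = {f \<in> Hcarrier G n. (\<forall>u j. j < m \<longrightarrow> f u j = 0) \<and>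
                         (\<forall>u\<in>carrier G. conv G (\<lambda>v. f v m) e u = 0)}"
  have conv_zero_right: "conv G a (\<lambda>_. 0) u = 0" for a :: "'a \<Rightarrow> 'k" and u
    by (simp add: conv_def)
  have Ideal: "Hideal G \<chi> n I"
    unfolding Hideal_def
  proof (intro conjI ballI)
    show "I \<subseteq> Hcarrier G n" by (auto simp: I_def)
    show "Hzero \<in> I" by (auto simp: I_def Hzero_def Hcarrier_def conv_def)
  next
    fix a b :: "'a \<Rightarrow> nat \<Rightarrow> 'k" assume a: "a \<in> I" and b: "b \<in> I"
    show "Hadd a b \<in> I"
      using a b by (auto simp: I_def Hadd_def Hcarrier_def conv_add_left)
  next
    fix h f :: "'a \<Rightarrow> nat \<Rightarrow> 'k" assume h: "h \<in> Hcarrier G n" and f: "f \<in> I"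
    have fz: "\<And>u j. j < m \<Longrightarrow> f u j = 0" and fc: "f \<in> Hcarrier G n"
      and fe: "\<And>u. u \<in> carrier G \<Longrightarrow> conv G (\<lambda>v. f v m) e u = 0"
      using f by (auto simp: I_def)
    have L1: "Hmult G \<chi> n h f u j = 0" if j: "j < m" for u j
      unfolding Hmult_def using j fz by (auto intro!: sum.neutral)
    have L2: "Hmult G \<chi> n h f u m = conv G (\<lambda>v. h v 0) (\<lambda>v. f v m) u" if u: "u \<in> carrier G" for u
    proof -
      have "Hmult G \<chi> n h f u m = (\<Sum>s\<in>carrier G. \<Sum>i\<le>m. h s i * f (inv s \<otimes> u) (m - i) * \<chi> (inv s \<otimes> u) ^ i)"
        using u mn by (simp add: Hmult_def)
      also have "\<dots> = (\<Sum>s\<in>carrier G. h s 0 * f (inv s \<otimes> u) m)"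
      proof (rule sum.cong[OF refl])
        fix s assume s: "s \<in> carrier G"
        have "(\<Sum>i\<le>m. h s i * f (inv s \<otimes> u) (m - i) * \<chi> (inv s \<otimes> u) ^ i) =
              (if 0 \<in> {..m} then h s 0 * f (inv s \<otimes> u) (m - 0) * \<chi> (inv s \<otimes> u) ^ 0 else 0)"
          by (rule sum_single) (auto simp: fz)
        then show "(\<Sum>i\<le>m. h s i * f (inv s \<otimes> u) (m - i) * \<chi> (inv s \<otimes> u) ^ i) = h s 0 * f (inv s \<otimes> u) m"
          by simp
      qed
      finally show ?thesis by (simp add: conv_def)
    qed
    have R1: "Hmult G \<chi> n f h u j = 0" if j: "j < m" for u j
      unfolding Hmult_def using j fz by (auto intro!: sum.neutral)
    have R2: "Hmult G \<chi> n f h u m = conv G (\<lambda>v. f v m) (\<lambda>v. \<chi> v ^ m * h v 0) u" if u: "u \<in> carrier G" for u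
    proof -
      have "Hmult G \<chi> n f h u m = (\<Sum>s\<in>carrier G. \<Sum>i\<le>m. f s i * h (inv s \<otimes> u) (m - i) * \<chi> (inv s \<otimes> u) ^ i)"
        using u mn by (simp add: Hmult_def)
      also have "\<dots> = (\<Sum>s\<in>carrier G. f s m * (\<chi> (inv s \<otimes> u) ^ m * h (inv s \<otimes> u) 0))"
      proof (rule sum.cong[OF refl])
        fix s assume s: "s \<in> carrier G"
        have "(\<Sum>i\<le>m. f s i * h (inv s \<otimes> u) (m - i) * \<chi> (inv s \<otimes> u) ^ i) =
              (if m \<in> {..m} then f s m * h (inv s \<otimes> u) (m - m) * \<chi> (inv s \<otimes> u) ^ m else 0)"
          by (rule sum_single) (auto simp: fz)
        then show "(\<Sum>i\<le>m. f s i * h (inv s \<otimes> u) (m - i) * \<chi> (inv s \<otimes> u) ^ i) =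
            f s m * (\<chi> (inv s \<otimes> u) ^ m * h (inv s \<otimes> u) 0)"
          by (simp add: mult_ac)
      qed
      finally show ?thesis by (simp add: conv_def)
    qed
    show "Hmult G \<chi> n h f \<in> I"
      unfolding I_def
    proof (intro CollectI conjI allI impI ballI)
      show "Hmult G \<chi> n h f \<in> Hcarrier G n" by (rule Hmult_carrier)
      fix u j assume "j < m" then show "Hmult G \<chi> n h f u j = 0" by (rule L1)
    next
      fix u assume u: "u \<in> carrier G"
      have "conv G (\<lambda>v. Hmult G \<chi> n h f v m) e u = conv G (conv G (\<lambda>v. h v 0) (\<lambda>v. f v m)) e u"
        using u by (intro conv_cong) (auto simp: L2)
      also have "\<dots> = conv G (\<lambda>v. h v 0) (conv G (\<lambda>v. f v m) e) u"
        by (rule conv_assoc[OF u])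
      also have "\<dots> = conv G (\<lambda>v. h v 0) (\<lambda>_. 0) u"
        using u by (intro conv_cong) (auto simp: fe)
      also have "\<dots> = 0" by (rule conv_zero_right)
      finally show "conv G (\<lambda>v. Hmult G \<chi> n h f v m) e u = 0" .
    qed
    let ?th = "\<lambda>v. \<chi> v ^ m * h v 0"
    show "Hmult G \<chi> n f h \<in> I"
      unfolding I_def
    proof (intro CollectI conjI allI impI ballI)
      show "Hmult G \<chi> n f h \<in> Hcarrier G n" by (rule Hmult_carrier)
      fix u j assume "j < m" then show "Hmult G \<chi> n f h u j = 0" by (rule R1)
    next
      fix u assume u: "u \<in> carrier G"
      have comm: "conv G ?th e x = conv G e ?th x" if x: "x \<in> carrier G" for x
      proof -
        have "conv G ?th e x = \<chi> x ^ m * conv G (\<lambda>v. h v 0) (ehat G \<psi>) x"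
          unfolding e_def by (rule tw_conv[OF x chi, symmetric])
        also have "\<dots> = \<chi> x ^ m * conv G (ehat G \<psi>) (\<lambda>v. h v 0) x"
          by (simp add: ehat_central[OF psi x])
        also have "\<dots> = conv G e ?th x"
          unfolding e_def by (rule tw_conv[OF x chi])
        finally show ?thesis .
      qed
      have "conv G (\<lambda>v. Hmult G \<chi> n f h v m) e u = conv G (conv G (\<lambda>v. f v m) ?th) e u"
        using u by (intro conv_cong) (auto simp: R2)
      also have "\<dots> = conv G (\<lambda>v. f v m) (conv G ?th e) u"
        by (rule conv_assoc[OF u])
      also have "\<dots> = conv G (\<lambda>v. f v m) (conv G e ?th) u"
        by (rule conv_cong[OF u]) (auto simp: comm)
      also have "\<dots> = conv G (conv G (\<lambda>v. f v m) e) ?th u"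
        by (rule conv_assoc[OF u, symmetric])
      also have "\<dots> = 0"
        by (rule conv_zero_left) (simp add: fe)
      finally show "conv G (\<lambda>v. Hmult G \<chi> n f h v m) e u = 0" .
    qed
  qed
  have conv_x: "conv G (\<lambda>v. Hmult G \<chi> n (Hbasis \<one> m) (idem_sum G X) v m) e u =
        \<chi> u ^ m * (\<Sum>\<phi>\<in>X. if \<phi> = \<psi> then ehat G \<psi> u else 0)"
    if X: "X \<subseteq> irr_chars G" and u: "u \<in> carrier G" for X u
  proof -
    have "conv G (\<lambda>v. Hmult G \<chi> n (Hbasis \<one> m) (idem_sum G X) v m) e u =
          conv G (\<lambda>v. \<chi> v ^ m * (\<Sum>\<phi>\<in>X. ehat G \<phi> v)) e u"
      using u by (intro conv_cong) (auto simp: xform[OF mn fin])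
    also have "\<dots> = \<chi> u ^ m * conv G (\<lambda>v. \<Sum>\<phi>\<in>X. ehat G \<phi> v) (ehat G \<psi>) u"
      unfolding e_def by (rule tw_conv[OF u chi, symmetric])
    also have "conv G (\<lambda>v. \<Sum>\<phi>\<in>X. ehat G \<phi> v) (ehat G \<psi>) u = (\<Sum>\<phi>\<in>X. conv G (ehat G \<phi>) (ehat G \<psi>) u)"
      by (rule conv_sum_left)
    also have "\<dots> = (\<Sum>\<phi>\<in>X. if \<phi> = \<psi> then ehat G \<psi> u else 0)"
      using X u by (intro sum.cong refl) (auto simp: ehat_mult[OF ac fin _ psi u])
    finally show ?thesis .
  qed
  have xT: "?xT \<in> I"
    unfolding I_def
  proof (intro CollectI conjI allI impI ballI)
    show "?xT \<in> Hcarrier G n" by (rule Hmult_carrier)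
    fix u j assume "j < m" then show "?xT u j = 0" by (simp add: xform[OF mn fin])
  next
    fix u assume u: "u \<in> carrier G"
    show "conv G (\<lambda>v. ?xT v m) e u = 0"
      using conv_x[OF T u] psiT by (simp add: sum.neutral)
  qed
  have xS: "?xS \<notin> I"
  proof
    assume "?xS \<in> I"
    then have "conv G (\<lambda>v. ?xS v m) e \<one> = 0" by (auto simp: I_def)
    moreover have "conv G (\<lambda>v. ?xS v m) e \<one> = ehat G \<psi> \<one>"
      using conv_x[OF S one_closed] chi_one[OF chi0 chi] finS psiS by (simp add: sum.delta')
    moreover have "ehat G \<psi> \<one> \<noteq> 0"
    proof -
      have "(of_nat (card (carrier G)) :: 'k) \<noteq> 0"
        using fin by (simp add: card_gt_0_iff[symmetric]) (use one_closed in blast)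
      then show ?thesis using irr_char_one_nz[OF psi] by (simp add: ehat_def)
    qed
    ultimately show False by simp
  qed
  show ?thesis
  proof
    assume "?xS \<in> Hideal_gen G \<chi> n ?xT"
    then have "?xS \<in> I" using Ideal xT unfolding Hideal_gen_def by blast
    with xS show False by simp
  qed
qed

end

theorem corollary3p7:
  fixes G :: "'g monoid" and \<chi> :: "'g \<Rightarrow> 'k::field_char_0" and g :: 'g and n :: nat
  assumes "alg_closed_field TYPE('k)"
    and "group G" and "finite (carrier G)"
    and "\<forall>s\<in>carrier G. \<chi> s \<noteq> 0"
    and "\<forall>s\<in>carrier G. \<forall>t\<in>carrier G. \<chi> (s \<otimes>\<^bsub>G\<^esub> t) = \<chi> s * \<chi> t"
    and "g \<in> carrier G" and "\<forall>s\<in>carrier G. g \<otimes>\<^bsub>G\<^esub> s = s \<otimes>\<^bsub>G\<^esub> g"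
    and "n \<ge> 2" and "\<chi> g ^ n = 1" and "\<forall>j. 0 < j \<and> j < n \<longrightarrow> \<chi> g ^ j \<noteq> 1"
    and "m < n"
    and "S \<subseteq> irr_chars G" and "S \<noteq> {}"
    and "T \<subseteq> irr_chars G" and "T \<noteq> {}"
    and "S \<noteq> T"
  shows "Hideal_gen G \<chi> n (Hmult G \<chi> n (Hbasis \<one>\<^bsub>G\<^esub> m) (idem_sum G S))
       \<noteq> Hideal_gen G \<chi> n (Hmult G \<chi> n (Hbasis \<one>\<^bsub>G\<^esub> m) (idem_sum G T))"
proof
  let ?xS = "Hmult G \<chi> n (Hbasis \<one>\<^bsub>G\<^esub> m) (idem_sum G S)"
  let ?xT = "Hmult G \<chi> n (Hbasis \<one>\<^bsub>G\<^esub> m) (idem_sum G T)"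
  assume eq: "Hideal_gen G \<chi> n ?xS = Hideal_gen G \<chi> n ?xT"
  from \<open>S \<noteq> T\<close> obtain \<psi> where "(\<psi> \<in> S \<and> \<psi> \<notin> T) \<or> (\<psi> \<in> T \<and> \<psi> \<notin> S)" by blast
  then show False
  proof
    assume "\<psi> \<in> S \<and> \<psi> \<notin> T"
    then have "?xS \<notin> Hideal_gen G \<chi> n ?xT"
      using group.key[OF assms(2) assms(1) assms(3) assms(4) assms(5) assms(11) assms(12) assms(14)] by blast
    moreover have "?xS \<in> Hideal_gen G \<chi> n ?xS" by (rule gen_mem)
    ultimately show False using eq by simp
  next
    assume "\<psi> \<in> T \<and> \<psi> \<notin> S"
    then have "?xT \<notin> Hideal_gen G \<chi> n ?xS"
      using group.key[OF assms(2) assms(1) assms(3) assms(4) assms(5) assms(11) assms(14) assms(12)] by blast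
    moreover have "?xT \<in> Hideal_gen G \<chi> n ?xT" by (rule gen_mem)
    ultimately show False using eq by simp
  qed
qed

end
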